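(* Let $h>0$, $C\neq 0$ and $n\neq 0$ be real constants, and let $F,Z,U:(0,\infty)\to\mathbb{R}$ be smooth with $Z(\phi)\neq 0$ for all $\phi>0$. Consider the ODE for $\phi=\phi(t)>0$, $t>0$, $$2Z(\phi)\Bigl(\phi''+\frac{h}{t}\phi'\Bigr)=C\,t^{-2}F'(\phi)-Z'(\phi)\,\phi'^2-2U'(\phi).$$ This ODE is invariant under the scaling group $(t,\phi)\mapsto(\lambda t,\lambda^n\phi)$, $\lambda>0$ (equivalently, admits the Lie point symmetry $t\partial_t+n\phi\partial_\phi$), if and only if there are constants $Z_0\neq 0$, $m$, $F_1$, $U_1$ such that for all $\phi>0$ $$Z(\phi)=Z_0\phi^{-m},\qquad F'(\phi)=F_1\phi^{1-m},\qquad U'(\phi)=U_1\phi^{\frac{n-2}{n}-m}.$$ Consequently, in the invariant case: if $m\neq 2$ then $F(\phi)=C_1+F_0\phi^{2-m}$ for constants $C_1,F_0$; and if $mn-2n+2\neq 0$ then $U(\phi)=C_2+U_0\phi^{-\frac{mn-2n+2}{n}}$ for constants $C_2,U_0$. For the invariant power-law $\phi=\phi_0 t^n$ one has $Z(\phi)=Z_0\phi_0^{-m}t^{-nm}$.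
   Context: This ODE is the scalar-field equation $2Z\square\phi=F'(\phi)R-Z'(\phi)\phi_{,\alpha}\phi^{,\alpha}-2U'(\phi)$ of the generalized scalar-tensor theory with action $\frac{1}{8\pi}\int\sqrt{-g}\{\frac12[F(\phi)R-Z(\phi)\phi_{,\alpha}\phi^{,\alpha}-2U(\phi)]+\mathcal{L}_M\}$, for a homogeneous field $\phi(t)$ on a self-similar spatially homogeneous background with $H=h/t$ and scalar curvature $R=Ct^{-2}$. An ODE $\phi''=\Phi(t,\phi,\phi')$ is called invariant under the scaling group $(t,\phi)\mapsto(\lambda t,\lambda^n\phi)$ if $\Phi(\lambda t,\lambda^n\phi,\lambda^{n-1}p)=\lambda^{n-2}\Phi(t,\phi,p)$ for all $\lambda>0$, $t>0$, $\phi>0$, $p\in\mathbb{R}$. The time variable may be shifted, $t\to t+t_0$. *)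

theory Defs
  imports "HOL-Analysis.Analysis"
begin

definition smooth_on :: "real set \<Rightarrow> (real \<Rightarrow> real) \<Rightarrow> bool" where
  "smooth_on S f \<longleftrightarrow> (\<forall>k. \<forall>x\<in>S. ((deriv ^^ k) f) differentiable (at x))"

text \<open>Right-hand side Phi(t,phi,p) of the ODE written as phi'' = Phi(t,phi,phi'),
obtained from 2 Z(phi)(phi'' + (h/t) phi') = C t^-2 F'(phi) - Z'(phi) phi'^2 - 2 U'(phi).\<close>
definition ode_rhs ::
  "real \<Rightarrow> real \<Rightarrow> (real \<Rightarrow> real) \<Rightarrow> (real \<Rightarrow> real) \<Rightarrow> (real \<Rightarrow> real)
    \<Rightarrow> real \<Rightarrow> real \<Rightarrow> real \<Rightarrow> real" where
  "ode_rhs h C F Z U t ph p =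
     (C * t powr (-2) * deriv F ph - deriv Z ph * p\<^sup>2 - 2 * deriv U ph) / (2 * Z ph)
     - (h / t) * p"

text \<open>Invariance of phi'' = Phi(t,phi,phi') under (t,phi) \<mapsto> (lambda t, lambda^n phi).\<close>
definition scale_invariant :: "real \<Rightarrow> (real \<Rightarrow> real \<Rightarrow> real \<Rightarrow> real) \<Rightarrow> bool" where
  "scale_invariant n Phi \<longleftrightarrow>
     (\<forall>l>0. \<forall>t>0. \<forall>ph>0. \<forall>p.
        Phi (l * t) (l powr n * ph) (l powr (n - 1) * p) = l powr (n - 2) * Phi t ph p)"

end

theory Submission imports Defs begin

lemma ode_rhs_eq:
  "ode_rhs h C F Z U t ph p = (C * deriv F ph / (2*Z ph)) * t powr (-2)
     + (- deriv Z ph/(2*Z ph)) * p^2 + (- deriv U ph / Z ph) - h/t*p"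
  unfolding ode_rhs_def by (simp add: add_divide_distrib diff_divide_distrib)

lemma const_from_deriv:
  fixes f :: "real \<Rightarrow> real"
  assumes "\<And>y. y > 0 \<Longrightarrow> (f has_real_derivative 0) (at y)"
  shows "\<exists>c. \<forall>y>0. f y = c"
proof -
  have "\<exists>c. \<forall>y\<in>{0<..}. f y = c"
    by (rule has_field_derivative_zero_constant) (auto intro: has_field_derivative_at_within assms)
  thus ?thesis by auto
qed

lemma antideriv_powr:
  fixes f :: "real \<Rightarrow> real"
  assumes d: "\<And>y. y > 0 \<Longrightarrow> f differentiable at y"
    and e: "\<And>y. y > 0 \<Longrightarrow> deriv f y = A * y powr r" and r: "r \<noteq> -1"
  shows "\<exists>c0. \<forall>y>0. f y = c0 + A/(r+1) * y powr (r+1)"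
proof -
  have "\<exists>c. \<forall>y>0. f y - A/(r+1) * y powr (r+1) = c"
  proof (rule const_from_deriv)
    fix y :: real assume y: "y > 0"
    have "(f has_real_derivative deriv f y) (at y)"
      using d[OF y] DERIV_deriv_iff_real_differentiable by blast
    moreover have "((\<lambda>y. y powr (r+1)) has_real_derivative (r+1) * y powr r) (at y)"
      using has_real_derivative_powr[OF y, of "r+1"] by simp
    ultimately have "((\<lambda>y. f y - A/(r+1) * y powr (r+1)) has_real_derivative
        deriv f y - A/(r+1) * ((r+1) * y powr r)) (at y)"
      by (intro DERIV_diff DERIV_cmult)
    moreover have "deriv f y - A/(r+1) * ((r+1) * y powr r) = 0"
      using e[OF y] r by (simp add: field_simps)
    ultimately show "((\<lambda>y. f y - A/(r+1) * y powr (r+1)) has_real_derivative 0) (at y)" by simp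
  qed
  then obtain c where "\<forall>y>0. f y - A/(r+1) * y powr (r+1) = c" by blast
  thus ?thesis by (intro exI[of _ c]) (auto simp: algebra_simps)
qed

lemma scale_forward:
  fixes a b c :: "real \<Rightarrow> real" and n h :: real
  assumes n: "n \<noteq> 0"
    and inv: "\<And>l t ph p. l > 0 \<Longrightarrow> t > 0 \<Longrightarrow> ph > 0 \<Longrightarrow>
        a (l powr n * ph) * (l*t) powr (-2) + b (l powr n * ph) * (l powr (n-1) * p)^2
          + c (l powr n * ph) - h/(l*t) * (l powr (n-1) * p)
        = l powr (n-2) * (a ph * t powr (-2) + b ph * p^2 + c ph - h/t*p)"
    and x: "x > 0"
  shows "a x = x * a 1 \<and> b x = b 1 / x \<and> c x = x powr ((n-2)/n) * c 1"
proof -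
  define l where "l = x powr (1/n)"
  define q where "q = l powr (n-2)"
  have l: "l > 0" using x by (simp add: l_def)
  have q: "q > 0" using l by (simp add: q_def)
  have ln: "l powr n = x" using x n by (simp add: l_def powr_powr)
  have l2: "l powr (-2) = q / x"
  proof -
    have "l powr (-2) = l powr ((n-2) - n)" by simp
    also have "\<dots> = q / l powr n" by (simp only: powr_diff q_def)
    finally show ?thesis using ln by simp
  qed
  have l2b: "(l*2) powr (-2) = q / x / 4"
    using l l2 by (simp add: powr_mult powr_minus)
  have lsq: "(l powr (n-1))^2 = q * x"
  proof -
    have "(l powr (n-1))^2 = l powr ((n-1)+(n-1))" by (simp only: power2_eq_square powr_add)
    also have "\<dots> = l powr ((n-2) + n)" by (simp add: algebra_simps)
    also have "\<dots> = q * x" by (simp only: powr_add q_def ln)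
    finally show ?thesis .
  qed
  have lh: "h/l * l powr (n-1) = h * q"
    using l by (simp add: q_def powr_diff powr_diff[of l n 1] ln power2_eq_square)
  have qx: "q = x powr ((n-2)/n)"
    using x by (simp add: q_def l_def powr_powr)
  have E1: "a x * (q/x) + c x = q*(a 1 + c 1)"
    using inv[OF l, of 1 1 0] l2 ln by (simp add: q_def[symmetric])
  have p2: "(2::real) powr (-2) = 1/4" by (simp add: powr_minus_divide)
  have E2: "a x * (q/x/4) + c x = q*(a 1/4 + c 1)"
    using inv[OF l, of 2 1 0] unfolding l2b p2 by (simp add: ln q_def[symmetric])
  have E3: "a x * (q/x) + b x * (q*x) + c x - h*q = q*(a 1 + b 1 + c 1 - h)"
    using inv[OF l, of 1 1 1] l2 ln lsq lh by (simp add: q_def[symmetric])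
  have A: "a x = x * a 1"
  proof -
    have lin: "\<And>u c A B::real. u + c = A + B \<Longrightarrow> u/4 + c = A/4 + B \<Longrightarrow> u = A" by linarith
    have "a x * (q/x) = q * a 1"
      using lin[of "a x*(q/x)" "c x" "q*a 1" "q*c 1"] E1 E2 by (simp add: algebra_simps)
    thus ?thesis using q x by (simp add: field_simps)
  qed
  have Cc: "c x = q * c 1" using E1 A x by (simp add: field_simps)
  have B: "b x = b 1 / x"
  proof -
    have h3: "c x + (q*(x*b x) + q*a x/x) = q*a 1 + (q*b 1 + q*c 1)" using E3 by (simp add: algebra_simps)
    have h1: "c x + q*a x/x = q*a 1 + q*c 1" using E1 by (simp add: algebra_simps)
    have "q*(x*b x) = q*b 1" using h1 h3 by linarith
    hence "x*b x = b 1" using q by simp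
    thus ?thesis using x by (simp add: field_simps)
  qed
  show ?thesis using A B Cc qx by simp
qed

lemma scale_backward:
  fixes a b c :: "real \<Rightarrow> real" and n h A B K :: real
  assumes n: "n \<noteq> 0"
    and ab: "\<And>x. x > 0 \<Longrightarrow> a x = A * x \<and> b x = B / x \<and> c x = K * x powr ((n-2)/n)"
    and l: "l > 0" and t: "t > 0" and ph: "ph > 0"
  shows "a (l powr n * ph) * (l*t) powr (-2) + b (l powr n * ph) * (l powr (n-1) * p)^2
          + c (l powr n * ph) - h/(l*t) * (l powr (n-1) * p)
        = l powr (n-2) * (a ph * t powr (-2) + b ph * p^2 + c ph - h/t*p)"
proof -
  define s where "s = l powr n"
  define q where "q = l powr (n-2)"
  have s: "s > 0" using l by (simp add: s_def)
  have q: "q > 0" using l by (simp add: q_def)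
  have l2: "l powr (-2) = q / s"
  proof -
    have "l powr (-2) = l powr ((n-2) - n)" by simp
    also have "\<dots> = q / s" by (simp only: powr_diff q_def s_def)
    finally show ?thesis .
  qed
  have f1: "(l*t) powr (-2) = q / s * t powr (-2)"
    using l t l2 by (simp add: powr_mult)
  have f2: "(l powr (n-1) * p)^2 = q * s * p^2"
  proof -
    have "(l powr (n-1))^2 = l powr ((n-1)+(n-1))" by (simp only: power2_eq_square powr_add)
    also have "\<dots> = l powr ((n-2) + n)" by (simp add: algebra_simps)
    also have "\<dots> = q * s" by (simp only: powr_add q_def s_def)
    finally show ?thesis by (simp add: power_mult_distrib)
  qed
  have f3: "h/(l*t) * (l powr (n-1) * p) = q * (h/t*p)"
    using l by (simp add: q_def powr_diff powr_diff[of l n 1] power2_eq_square) (simp add: ac_simps)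
  have f4: "(s*ph) powr ((n-2)/n) = q * ph powr ((n-2)/n)"
    using l ph s n by (simp add: powr_mult s_def q_def powr_powr)
  have sph: "s * ph > 0" using s ph by simp
  show ?thesis
    unfolding s_def[symmetric] q_def[symmetric] f1 f2 f3
    using ab[OF sph] ab[OF ph] f4 s ph
  proof -
    from ab[OF sph] have a1: "a (s*ph) = A*(s*ph)" and b1: "b (s*ph) = B/(s*ph)"
      and c1: "c (s*ph) = K*(q*ph powr ((n-2)/n))" using f4 by auto
    from ab[OF ph] have a2: "a ph = A*ph" and b2: "b ph = B/ph"
      and c2: "c ph = K*ph powr ((n-2)/n)" by auto
    show "a (s * ph) * (q / s * t powr - 2) + b (s * ph) * (q * s * p\<^sup>2) + c (s * ph) - q * (h / t * p) =
    q * (a ph * t powr - 2 + b ph * p\<^sup>2 + c ph - h / t * p)"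
      unfolding a1 b1 c1 a2 b2 c2 using s ph by (simp add: field_simps)
  qed
qed

lemma smooth_diff: "smooth_on {0<..} f \<Longrightarrow> y > 0 \<Longrightarrow> f differentiable at y"
  unfolding smooth_on_def by (drule spec[of _ 0]) auto

lemma deriv_Z_form:
  fixes Z :: "real \<Rightarrow> real"
  assumes "\<forall>ph>0. Z ph = Z0 * ph powr (-m)" and x: "x > 0"
  shows "deriv Z x = Z0 * (-m * x powr (-m-1))"
proof -
  have ev: "eventually (\<lambda>y. Z y = Z0 * y powr (-m)) (nhds x)"
    using eventually_nhds_in_open[of "{0<..}" x] x assms(1)
    by (auto elim!: eventually_mono)
  have "deriv Z x = deriv (\<lambda>y. Z0 * y powr (-m)) x"
    by (rule deriv_cong_ev[OF ev refl])
  also have "\<dots> = Z0 * (-m * x powr (-m-1))"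
    by (rule DERIV_imp_deriv) (intro DERIV_cmult has_real_derivative_powr x)
  finally show ?thesis .
qed

theorem mainTheorem2:
  fixes h C n :: real and F Z U :: "real \<Rightarrow> real"
  assumes "h > 0" and "C \<noteq> 0" and "n \<noteq> 0"
    and "smooth_on {0<..} F" and "smooth_on {0<..} Z" and "smooth_on {0<..} U"
    and "\<forall>ph>0. Z ph \<noteq> 0"
  shows "(scale_invariant n (ode_rhs h C F Z U) \<longleftrightarrow>
           (\<exists>Z0 m F1 U1. Z0 \<noteq> 0 \<and>
              (\<forall>ph>0. Z ph = Z0 * ph powr (-m)
                    \<and> deriv F ph = F1 * ph powr (1 - m)
                    \<and> deriv U ph = U1 * ph powr ((n - 2) / n - m))))
       \<and> (\<forall>Z0 m F1 U1. Z0 \<noteq> 0 \<and>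
              (\<forall>ph>0. Z ph = Z0 * ph powr (-m)
                    \<and> deriv F ph = F1 * ph powr (1 - m)
                    \<and> deriv U ph = U1 * ph powr ((n - 2) / n - m)) \<longrightarrow>
            (m \<noteq> 2 \<longrightarrow> (\<exists>C1 F0. \<forall>ph>0. F ph = C1 + F0 * ph powr (2 - m)))
          \<and> (m * n - 2 * n + 2 \<noteq> 0 \<longrightarrow>
               (\<exists>C2 U0. \<forall>ph>0. U ph = C2 + U0 * ph powr (- (m * n - 2 * n + 2) / n)))
          \<and> (\<forall>ph0>0. \<forall>t>0. Z (ph0 * t powr n) = Z0 * ph0 powr (-m) * t powr (- n * m)))"
proof (intro conjI allI impI)
  note C = assms(2) and n = assms(3) and Znz = assms(7)
  note dF = smooth_diff[OF assms(4)] and dZ = smooth_diff[OF assms(5)] and dU = smooth_diff[OF assms(6)]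
  define e where "e = (n-2)/n"
  show "scale_invariant n (ode_rhs h C F Z U) \<longleftrightarrow>
           (\<exists>Z0 m F1 U1. Z0 \<noteq> 0 \<and>
              (\<forall>ph>0. Z ph = Z0 * ph powr (-m)
                    \<and> deriv F ph = F1 * ph powr (1 - m)
                    \<and> deriv U ph = U1 * ph powr ((n - 2) / n - m)))"
  proof
    assume SI: "scale_invariant n (ode_rhs h C F Z U)"
    have key: "\<And>x. x > 0 \<Longrightarrow>
       C * deriv F x / (2*Z x) = x * (C * deriv F 1 / (2*Z 1)) \<and>
       - deriv Z x / (2*Z x) = (- deriv Z 1 / (2*Z 1)) / x \<and>
       - deriv U x / Z x = x powr ((n-2)/n) * (- deriv U 1 / Z 1)"
      by (rule scale_forward[of n "\<lambda>ph. C * deriv F ph / (2*Z ph)"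
            "\<lambda>ph. - deriv Z ph / (2*Z ph)" "\<lambda>ph. - deriv U ph / Z ph" h, OF n])
         (use SI in \<open>auto simp: scale_invariant_def ode_rhs_eq\<close>)
    define a1 where "a1 = C * deriv F 1 / (2*Z 1)"
    define b1 where "b1 = - deriv Z 1 / (2*Z 1)"
    define c1 where "c1 = - deriv U 1 / Z 1"
    define m where "m = 2*b1"
    have dZx: "deriv Z x = - m * Z x / x" if x: "x > 0" for x
    proof -
      have "- deriv Z x / (2*Z x) = b1 / x" using key[OF x] by (simp add: b1_def)
      thus ?thesis using Znz x by (simp add: m_def field_simps)
    qed
    have "\<exists>c. \<forall>y>0. Z y * y powr m = c"
    proof (rule const_from_deriv)
      fix y :: real assume y: "y > 0"
      have "(Z has_real_derivative deriv Z y) (at y)"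
        using dZ[OF y] DERIV_deriv_iff_real_differentiable by blast
      hence "((\<lambda>y. Z y * y powr m) has_real_derivative
          deriv Z y * y powr m + (m * y powr (m - 1)) * Z y) (at y)"
        by (rule DERIV_mult[OF _ has_real_derivative_powr[OF y]])
      moreover have "deriv Z y * y powr m + (m * y powr (m - 1)) * Z y = 0"
        using y by (simp add: dZx powr_diff field_simps)
      ultimately show "((\<lambda>y. Z y * y powr m) has_real_derivative 0) (at y)" by simp
    qed
    then obtain c where c: "\<And>y. y > 0 \<Longrightarrow> Z y * y powr m = c" by blast
    have Zf: "Z y = c * y powr (-m)" if y: "y > 0" for y
      using c[OF y] y by (auto simp: powr_minus field_simps)
    have c0: "c \<noteq> 0" using c[of 1] Znz by auto
    show "\<exists>Z0 m F1 U1. Z0 \<noteq> 0 \<and>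
              (\<forall>ph>0. Z ph = Z0 * ph powr (-m)
                    \<and> deriv F ph = F1 * ph powr (1 - m)
                    \<and> deriv U ph = U1 * ph powr ((n - 2) / n - m))"
    proof -
     have "Z ph = c * ph powr (-m) \<and> deriv F ph = 2*c*a1/C * ph powr (1 - m) \<and>
        deriv U ph = -c*c1 * ph powr ((n-2)/n - m)" if ph: "ph > 0" for ph
     proof (intro conjI)
      show "Z ph = c * ph powr (-m)" by (rule Zf[OF ph])
      have "C * deriv F ph / (2*Z ph) = ph * a1" using key[OF ph] by (simp add: a1_def)
      hence "deriv F ph = 2 * Z ph * ph * a1 / C" using Znz ph C by (simp add: field_simps)
      also have "\<dots> = 2*c*a1/C * (ph powr (-m) * ph powr 1)" using ph by (simp add: Zf)
      also have "\<dots> = 2*c*a1/C * ph powr (1 - m)" using ph by (simp add: powr_diff powr_minus_divide)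
      finally show "deriv F ph = 2*c*a1/C * ph powr (1 - m)" .
      have "- deriv U ph / Z ph = ph powr ((n-2)/n) * c1" using key[OF ph] by (simp add: c1_def)
      hence "deriv U ph = - Z ph * ph powr ((n-2)/n) * c1" using Znz ph by (simp add: field_simps)
      also have "\<dots> = -c*c1 * (ph powr ((n-2)/n) * ph powr (-m))" using ph by (simp add: Zf)
      also have "\<dots> = -c*c1 * ph powr ((n-2)/n - m)" using ph by (simp add: powr_diff powr_minus_divide)
      finally show "deriv U ph = -c*c1 * ph powr ((n-2)/n - m)" .
     qed
     thus ?thesis using c0 by blast
    qed
  next
    assume "\<exists>Z0 m F1 U1. Z0 \<noteq> 0 \<and>
              (\<forall>ph>0. Z ph = Z0 * ph powr (-m)
                    \<and> deriv F ph = F1 * ph powr (1 - m)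
                    \<and> deriv U ph = U1 * ph powr ((n - 2) / n - m))"
    then obtain Z0 m F1 U1 where Z0: "Z0 \<noteq> 0" and H: "\<forall>ph>0. Z ph = Z0 * ph powr (-m)
                    \<and> deriv F ph = F1 * ph powr (1 - m)
                    \<and> deriv U ph = U1 * ph powr ((n - 2) / n - m)" by blast
    have HZ: "\<forall>ph>0. Z ph = Z0 * ph powr (-m)" using H by blast
    have ab: "C * deriv F x / (2*Z x) = C*F1/(2*Z0) * x \<and>
        - deriv Z x / (2*Z x) = (m/2) / x \<and>
        - deriv U x / Z x = (-U1/Z0) * x powr ((n-2)/n)" if x: "x > 0" for x
    proof -
      have p1: "x powr (1 - m) = x * x powr (-m)" using x by (simp add: powr_diff powr_minus_divide)
      have p2: "x powr (-m-1) = x powr (-m) / x" using x by (simp add: powr_diff)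
      have p3: "x powr ((n-2)/n - m) = x powr ((n-2)/n) * x powr (-m)" using x by (simp add: powr_diff powr_minus_divide)
      have xm: "x powr (-m) > 0" using x by simp
      show ?thesis using H x Z0 xm deriv_Z_form[OF HZ x]
        by (simp add: p1 p2 p3 field_simps)
    qed
    show "scale_invariant n (ode_rhs h C F Z U)"
      unfolding scale_invariant_def ode_rhs_eq
      by (intro allI impI scale_backward[where a="\<lambda>ph. C * deriv F ph / (2*Z ph)"
            and b="\<lambda>ph. - deriv Z ph / (2*Z ph)" and c="\<lambda>ph. - deriv U ph / Z ph"
            and A="C*F1/(2*Z0)" and B="m/2" and K="-U1/Z0", OF n])
         (use ab in auto)
  qed
next
  fix Z0 m F1 U1 :: real
  assume A: "Z0 \<noteq> 0 \<and> (\<forall>ph>0. Z ph = Z0 * ph powr (-m)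
                    \<and> deriv F ph = F1 * ph powr (1 - m)
                    \<and> deriv U ph = U1 * ph powr ((n - 2) / n - m))"
  note dF = smooth_diff[OF assms(4)] and dU = smooth_diff[OF assms(6)]
  {
    assume m2: "m \<noteq> 2"
    obtain c0 where "\<forall>y>0. F y = c0 + F1/((1-m)+1) * y powr ((1-m)+1)"
      using antideriv_powr[of F F1 "1-m"] dF A m2 by auto
    thus "\<exists>C1 F0. \<forall>ph>0. F ph = C1 + F0 * ph powr (2 - m)"
      by (intro exI[of _ c0] exI[of _ "F1/(2-m)"]) (simp add: algebra_simps)
  }
  {
    assume mn: "m * n - 2 * n + 2 \<noteq> 0"
    have r: "((n-2)/n - m) + 1 = - (m * n - 2 * n + 2) / n" using assms(3) by (simp add: field_simps)
    have r1: "(n-2)/n - m \<noteq> -1"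
    proof
      assume "(n-2)/n - m = -1"
      hence "- (m * n - 2 * n + 2) / n = 0" using r by simp
      thus False using mn assms(3) by simp
    qed
    obtain c0 where "\<forall>y>0. U y = c0 + U1/(((n-2)/n - m)+1) * y powr (((n-2)/n - m)+1)"
      using antideriv_powr[of U U1 "(n-2)/n - m"] dU A r1 by auto
    thus "\<exists>C2 U0. \<forall>ph>0. U ph = C2 + U0 * ph powr (- (m * n - 2 * n + 2) / n)"
      unfolding r by blast
  }
  {
    fix ph0 t :: real assume p: "ph0 > 0" and t: "t > 0"
    have "ph0 * t powr n > 0" using p t by simp
    hence "Z (ph0 * t powr n) = Z0 * (ph0 * t powr n) powr (-m)" using A by blast
    also have "\<dots> = Z0 * ph0 powr (-m) * t powr (- n * m)"
      using p t by (simp add: powr_mult powr_powr)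
    finally show "Z (ph0 * t powr n) = Z0 * ph0 powr (-m) * t powr (- n * m)" .
  }
qed

end
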